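(* Let $(X,V,v)$ be a measure space over a prering $V$ with $X\in V$, let $S=S(V)$ and let $N$ be the family of null sets. For $A\subset X$ the following are equivalent: (a) $A\in V_c$; (b) $A=B\triangle D$ for some $B\in S^{\delta\sigma}$ and $D\in N$; (c) $A=B\triangle D$ for some $B\in V^{\sigma\delta}$ and $D\in N$. Here $\triangle$ is symmetric difference, $W^\sigma$ (resp. $W^\delta$) denotes countable unions (resp. countable intersections) of members of $W$, $S^{\delta\sigma}=(S^\delta)^\sigma$ and $V^{\sigma\delta}=(V^\sigma)^\delta$.
   Context: Measure space: $X$ a set, $V$ a prering (i.e. $\emptyset\in V$ and for $A,B\in V$ the sets $A\cap B$, $A\setminus B$ belong to $S(V)$, the family of finite disjoint unions of members of $V$), $v:V\to[0,\infty)$ countably additive. $S(V,\mathbb R)$: simple functions $\sum r_ic_{A_i}$ with $A_i\in V$ pairwise disjoint; $\int h\,dv=\sum r_iv(A_i)$, $\|h\|=\int|h|dv$. Null set: for every $\varepsilon>0$ covered by countably many $A_t\in V$ with $\sum v(A_t)<\varepsilon$. Basic sequence: $s_n=h_1+\dots+h_n$ with simple $h_n$, $\|h_n\|\le M4^{-n}$. $L(v,\mathbb R)$: almost-everywhere limits of basic sequences. $V_c=\{A\subset X: c_A\in L(v,\mathbb R)\}$. *)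

theory Defs
  imports Complex_Main "HOL-Library.Disjoint_Sets" "HOL-Library.Indicator_Function"
begin

definition S_of :: "'a set set \<Rightarrow> 'a set set" where
  "S_of V = {\<Union>F | F. finite F \<and> F \<subseteq> V \<and> disjoint F}"

definition prering :: "'a set set \<Rightarrow> bool" where
  "prering V \<longleftrightarrow> {} \<in> V \<and> (\<forall>A\<in>V. \<forall>B\<in>V. A \<inter> B \<in> S_of V \<and> A - B \<in> S_of V)"

definition countably_additive_on :: "'a set set \<Rightarrow> ('a set \<Rightarrow> real) \<Rightarrow> bool" where
  "countably_additive_on V v \<longleftrightarrow>
     (\<forall>A\<in>V. 0 \<le> v A) \<and>
     (\<forall>A (F :: nat \<Rightarrow> 'a set). A \<in> V \<longrightarrow> range F \<subseteq> V \<longrightarrow> disjoint_family F \<longrightarrow>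
         A = (\<Union>n. F n) \<longrightarrow> (\<lambda>n. v (F n)) sums v A)"

definition measure_space_pr :: "'a set \<Rightarrow> 'a set set \<Rightarrow> ('a set \<Rightarrow> real) \<Rightarrow> bool" where
  "measure_space_pr X V v \<longleftrightarrow> V \<subseteq> Pow X \<and> prering V \<and> countably_additive_on V v"

definition simple_rep :: "'a set set \<Rightarrow> ('a \<Rightarrow> real) \<Rightarrow> nat \<Rightarrow> (nat \<Rightarrow> real) \<Rightarrow> (nat \<Rightarrow> 'a set) \<Rightarrow> bool" where
  "simple_rep V h n r A \<longleftrightarrow> (\<forall>i<n. A i \<in> V) \<and> disjoint_family_on A {..<n} \<and>
     h = (\<lambda>x. \<Sum>i<n. r i * indicator (A i) x)"

definition simple_fun :: "'a set set \<Rightarrow> ('a \<Rightarrow> real) \<Rightarrow> bool" where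
  "simple_fun V h \<longleftrightarrow> (\<exists>n r A. simple_rep V h n r A)"

text \<open>Integral of a simple function (independent of the representation).\<close>
definition simple_int :: "'a set set \<Rightarrow> ('a set \<Rightarrow> real) \<Rightarrow> ('a \<Rightarrow> real) \<Rightarrow> real" where
  "simple_int V v h = (SOME s. \<exists>n r A. simple_rep V h n r A \<and> s = (\<Sum>i<n. r i * v (A i)))"

definition simple_norm :: "'a set set \<Rightarrow> ('a set \<Rightarrow> real) \<Rightarrow> ('a \<Rightarrow> real) \<Rightarrow> real" where
  "simple_norm V v h = simple_int V v (\<lambda>x. \<bar>h x\<bar>)"

definition null_set :: "'a set set \<Rightarrow> ('a set \<Rightarrow> real) \<Rightarrow> 'a set \<Rightarrow> bool" where
  "null_set V v D \<longleftrightarrow> (\<forall>\<epsilon>>0. \<exists>At :: nat \<Rightarrow> 'a set. range At \<subseteq> V \<and> D \<subseteq> (\<Union>t. At t) \<and>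
      summable (\<lambda>t. v (At t)) \<and> (\<Sum>t. v (At t)) < \<epsilon>)"

definition basic_seq :: "'a set set \<Rightarrow> ('a set \<Rightarrow> real) \<Rightarrow> (nat \<Rightarrow> 'a \<Rightarrow> real) \<Rightarrow> bool" where
  "basic_seq V v s \<longleftrightarrow> (\<exists>(h :: nat \<Rightarrow> 'a \<Rightarrow> real) M.
      (\<forall>n\<ge>1. simple_fun V (h n) \<and> simple_norm V v (h n) \<le> M / 4 ^ n) \<and>
      (\<forall>n. s n = (\<lambda>x. \<Sum>k\<in>{1..n}. h k x)))"

definition L_space :: "'a set \<Rightarrow> 'a set set \<Rightarrow> ('a set \<Rightarrow> real) \<Rightarrow> ('a \<Rightarrow> real) set" where
  "L_space X V v = {f. \<exists>s. basic_seq V v s \<and>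
      null_set V v {x\<in>X. \<not> ((\<lambda>n. s n x) \<longlonglongrightarrow> f x)}}"

definition V_c :: "'a set \<Rightarrow> 'a set set \<Rightarrow> ('a set \<Rightarrow> real) \<Rightarrow> 'a set set" where
  "V_c X V v = {A. A \<subseteq> X \<and> indicator A \<in> L_space X V v}"

definition sigma_of :: "'a set set \<Rightarrow> 'a set set" where
  "sigma_of W = {\<Union>(range F) | F :: nat \<Rightarrow> 'a set. range F \<subseteq> W}"

definition delta_of :: "'a set set \<Rightarrow> 'a set set" where
  "delta_of W = {\<Inter>(range F) | F :: nat \<Rightarrow> 'a set. range F \<subseteq> W}"

definition symdiff :: "'a set \<Rightarrow> 'a set \<Rightarrow> 'a set" where
  "symdiff B D = (B - D) \<union> (D - B)"

end

theory Submission
  imports Defs "HOL-Analysis.Analysis"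
begin


lemma S_ofI: "finite C \<Longrightarrow> C \<subseteq> V \<Longrightarrow> disjoint C \<Longrightarrow> \<Union>C \<in> S_of V"
  unfolding S_of_def by blast

lemma S_ofE: assumes "E \<in> S_of V" obtains C where "finite C" "C \<subseteq> V" "disjoint C" "E = \<Union>C"
  using assms unfolding S_of_def by blast

lemma S_of_empty: "{} \<in> S_of V"
  using S_ofI[of "{}" V] by simp

lemma S_of_base: "A \<in> V \<Longrightarrow> A \<in> S_of V"
  using S_ofI[of "{A}" V] by (simp add: disjoint_def)

lemma S_of_Un2: assumes "E1 \<in> S_of V" "E2 \<in> S_of V" "E1 \<inter> E2 = {}" shows "E1 \<union> E2 \<in> S_of V"
proof -
  obtain C1 where C1: "finite C1" "C1 \<subseteq> V" "disjoint C1" "E1 = \<Union>C1" using assms(1) by (rule S_ofE)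
  obtain C2 where C2: "finite C2" "C2 \<subseteq> V" "disjoint C2" "E2 = \<Union>C2" using assms(2) by (rule S_ofE)
  have "disjoint (C1 \<union> C2)" using C1 C2 assms(3) by (intro disjoint_union) auto
  then have "\<Union>(C1 \<union> C2) \<in> S_of V" using C1 C2 by (intro S_ofI) auto
  then show ?thesis using C1 C2 by simp
qed

lemma S_of_UN: assumes "finite I" "\<And>i. i \<in> I \<Longrightarrow> f i \<in> S_of V" "disjoint_family_on f I"
  shows "(\<Union>i\<in>I. f i) \<in> S_of V"
  using assms
proof (induction I rule: finite_induct)
  case empty then show ?case by (simp add: S_of_empty)
next
  case (insert i I)
  have "(\<Union>j\<in>insert i I. f j) = f i \<union> (\<Union>j\<in>I. f j)" by simp
  moreover have "f i \<inter> (\<Union>j\<in>I. f j) = {}"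
    using insert.prems(2) insert.hyps(2) unfolding disjoint_family_on_def by fastforce
  moreover have "(\<Union>j\<in>I. f j) \<in> S_of V"
    using insert by (auto intro: disjoint_family_on_mono[of I "insert i I"])
  ultimately show ?case using insert.prems by (auto intro!: S_of_Un2)
qed

context
  fixes V :: "'a set set"
  assumes pr: "prering V"
begin

lemma S_Int_V: assumes "E \<in> S_of V" "c \<in> V" shows "E \<inter> c \<in> S_of V"
proof -
  obtain C where C: "finite C" "C \<subseteq> V" "disjoint C" "E = \<Union>C" using assms(1) by (rule S_ofE)
  have "E \<inter> c = (\<Union>a\<in>C. a \<inter> c)" using C by auto
  also have "\<dots> \<in> S_of V"
    using C pr assms(2) unfolding prering_def
    by (intro S_of_UN) (auto simp: disjoint_family_on_def disjoint_def)
  finally show ?thesis .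
qed

lemma S_Diff_V: assumes "E \<in> S_of V" "c \<in> V" shows "E - c \<in> S_of V"
proof -
  obtain C where C: "finite C" "C \<subseteq> V" "disjoint C" "E = \<Union>C" using assms(1) by (rule S_ofE)
  have "E - c = (\<Union>a\<in>C. a - c)" using C by auto
  also have "\<dots> \<in> S_of V"
    using C pr assms(2) unfolding prering_def
    by (intro S_of_UN) (auto simp: disjoint_family_on_def disjoint_def)
  finally show ?thesis .
qed

lemma S_Diff_fin: "finite C \<Longrightarrow> C \<subseteq> V \<Longrightarrow> E \<in> S_of V \<Longrightarrow> E - \<Union>C \<in> S_of V"
proof (induction C arbitrary: E rule: finite_induct)
  case empty then show ?case by simp
next
  case (insert c C)
  have "E - \<Union>(insert c C) = (E - c) - \<Union>C" by auto
  then show ?case using insert by (simp add: S_Diff_V)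
qed

lemma S_Diff: assumes "E1 \<in> S_of V" "E2 \<in> S_of V" shows "E1 - E2 \<in> S_of V"
proof -
  obtain C where C: "finite C" "C \<subseteq> V" "disjoint C" "E2 = \<Union>C" using assms(2) by (rule S_ofE)
  then show ?thesis using S_Diff_fin assms(1) by blast
qed

lemma S_Int: assumes "E1 \<in> S_of V" "E2 \<in> S_of V" shows "E1 \<inter> E2 \<in> S_of V"
proof -
  have "E1 \<inter> E2 = E1 - (E1 - E2)" by auto
  then show ?thesis using S_Diff assms by simp
qed

lemma S_Un: assumes "E1 \<in> S_of V" "E2 \<in> S_of V" shows "E1 \<union> E2 \<in> S_of V"
proof -
  have "E1 \<union> E2 = (E1 - E2) \<union> E2" by auto
  moreover have "(E1 - E2) \<inter> E2 = {}" by auto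
  ultimately show ?thesis using S_Diff[OF assms] S_of_Un2[of "E1 - E2" V E2] assms(2) by simp
qed

lemma S_ring: assumes "V \<subseteq> Pow X" shows "ring_of_sets X (S_of V)"
  unfolding ring_of_sets_iff
proof (intro conjI ballI)
  show "S_of V \<subseteq> Pow X" using assms by (auto simp: S_of_def)
qed (auto simp: S_of_empty S_Un S_Diff)

end


locale msp =
  fixes X :: "'a set" and V :: "'a set set" and v :: "'a set \<Rightarrow> real"
  assumes msp: "measure_space_pr X V v" and XV: "X \<in> V"
begin

lemma VX: "V \<subseteq> Pow X" using msp by (simp add: measure_space_pr_def)
lemma pr: "prering V" using msp by (simp add: measure_space_pr_def)
lemma cav: "countably_additive_on V v" using msp by (simp add: measure_space_pr_def)
lemma v_nonneg: "A \<in> V \<Longrightarrow> 0 \<le> v A" using cav by (simp add: countably_additive_on_def)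
lemma empty_V: "{} \<in> V" using pr by (simp add: prering_def)

lemma v_sums: "A \<in> V \<Longrightarrow> range F \<subseteq> V \<Longrightarrow> disjoint_family F \<Longrightarrow> A = (\<Union>n. F n) \<Longrightarrow> (\<lambda>n. v (F n)) sums v A"
  using cav by (simp add: countably_additive_on_def)

lemma v_empty: "v {} = 0"
proof -
  have "(\<lambda>n. v {}) sums v {}" using v_sums[of "{}" "\<lambda>_. {}"] empty_V
    by (auto simp: disjoint_family_on_def)
  then have "(\<lambda>n. v {}) \<longlonglongrightarrow> 0" by (intro summable_LIMSEQ_zero sums_summable)
  then show ?thesis using LIMSEQ_const_iff by blast
qed

abbreviation R where "R \<equiv> S_of V"

lemma ring: "ring_of_sets X R" using S_ring[OF pr VX] .

definition f :: "'a set \<Rightarrow> ennreal" where "f A = ennreal (v A)"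

lemma f_empty: "f {} = 0" by (simp add: f_def v_empty)

lemma pos_f: "positive V f" by (simp add: positive_def f_empty)

lemma ca_f: "countably_additive V f"
proof (rule countably_additiveI)
  fix A :: "nat \<Rightarrow> 'a set" assume A: "range A \<subseteq> V" "disjoint_family A" "(\<Union>i. A i) \<in> V"
  then have "(\<lambda>n. v (A n)) sums v (\<Union>i. A i)" by (intro v_sums) auto
  then show "(\<Sum>i. f (A i)) = f (\<Union>i. A i)" unfolding f_def
    using A by (intro suminf_ennreal_eq v_nonneg) auto
qed

lemma volume_f: "volume V f"
proof (rule volumeI)
  show "f {} = 0" by (rule f_empty)
  fix a assume "a \<in> V" then show "0 \<le> f a" by simp
next
  fix C assume sets_C: "C \<subseteq> V" "disjoint C" "finite C" "\<Union>C \<in> V"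
  have "\<exists>F'. bij_betw F' {..<card C} C"
    by (rule finite_same_card_bij[OF _ \<open>finite C\<close>]) auto
  then obtain F' where "bij_betw F' {..<card C} C" ..
  then have F': "C = F' ` {..< card C}" "inj_on F' {..< card C}"
    by (auto simp: bij_betw_def)
  { fix i j assume *: "i < card C" "j < card C" "i \<noteq> j"
    with F' have "F' i \<in> C" "F' j \<in> C" "F' i \<noteq> F' j"
      unfolding inj_on_def by auto
    with \<open>disjoint C\<close>[THEN disjointD]
    have "F' i \<inter> F' j = {}"
      by auto }
  note F'_disj = this
  define F where "F i = (if i < card C then F' i else {})" for i
  then have "disjoint_family F"
    using F'_disj by (auto simp: disjoint_family_on_def)
  moreover from F' have "(\<Union>i. F i) = \<Union>C"
    by (auto simp add: F_def split: if_split_asm cong del: SUP_cong)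
  moreover have sets_F: "\<And>i. F i \<in> V"
    using F' sets_C empty_V by (auto simp: F_def)
  moreover note sets_C
  ultimately have "f (\<Union>C) = (\<Sum>i. f (F i))"
    using ca_f[unfolded countably_additive_def, THEN spec, of F] by auto
  also have "\<dots> = (\<Sum>i<card C. f (F' i))"
  proof -
    have "(\<lambda>i. if i \<in> {..< card C} then f (F' i) else 0) sums (\<Sum>i<card C. f (F' i))"
      by (rule sums_If_finite_set) auto
    also have "(\<lambda>i. if i \<in> {..< card C} then f (F' i) else 0) = (\<lambda>i. f (F i))"
      by (auto simp: F_def f_empty)
    finally show "(\<Sum>i. f (F i)) = (\<Sum>i<card C. f (F' i))"
      by (simp add: sums_iff)
  qed
  also have "\<dots> = (\<Sum>c\<in>C. f c)"
    using F'(2) by (subst (2) F') (simp add: sum.reindex)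
  finally show "f (\<Union>C) = (\<Sum>c\<in>C. f c)" .
qed

definition dec :: "'a set \<Rightarrow> 'a set set" where
  "dec Y = (SOME C. finite C \<and> C \<subseteq> V \<and> disjoint C \<and> Y = \<Union>C)"

lemma dec: assumes "Y \<in> R" shows "finite (dec Y)" "dec Y \<subseteq> V" "disjoint (dec Y)" "Y = \<Union>(dec Y)"
proof -
  have "\<exists>C. finite C \<and> C \<subseteq> V \<and> disjoint C \<and> Y = \<Union>C" using assms by (auto simp: S_of_def)
  from someI_ex[OF this] show "finite (dec Y)" "dec Y \<subseteq> V" "disjoint (dec Y)" "Y = \<Union>(dec Y)"
    unfolding dec_def by auto
qed

definition g :: "'a set \<Rightarrow> 'a set \<Rightarrow> ennreal" where "g c d = (\<Sum>e\<in>dec (c \<inter> d). f e)"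

lemma split_sum:
  assumes C: "C \<subseteq> V" "finite C" "disjoint C" and d: "d \<in> V" "d \<subseteq> \<Union>C"
  shows "f d = (\<Sum>c\<in>C. g c d)"
proof -
  have cdR: "c \<inter> d \<in> R" if "c \<in> C" for c using that C d pr by (auto simp: prering_def)
  let ?I = "Sigma C (\<lambda>c. dec (c \<inter> d))"
  have decV: "\<And>c e. c \<in> C \<Longrightarrow> e \<in> dec (c \<inter> d) \<Longrightarrow> e \<in> V" using dec(2)[OF cdR] by blast
  have fin: "finite ?I" using C cdR dec by auto
  have Ueq: "(\<Union>p\<in>?I. snd p) = d"
  proof
    show "(\<Union>p\<in>?I. snd p) \<subseteq> d"
    proof (rule UN_least)
      fix p assume "p \<in> ?I"
      then have "fst p \<in> C" "snd p \<in> dec (fst p \<inter> d)" by auto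
      then show "snd p \<subseteq> d" using dec(4)[OF cdR[OF \<open>fst p \<in> C\<close>]] by blast
    qed
    show "d \<subseteq> (\<Union>p\<in>?I. snd p)"
    proof
      fix x assume "x \<in> d"
      then obtain c where "c \<in> C" "x \<in> c" using d by auto
      then have "x \<in> \<Union>(dec (c \<inter> d))" using dec(4)[OF cdR[OF \<open>c\<in>C\<close>]] \<open>x\<in>d\<close> by auto
      then show "x \<in> (\<Union>p\<in>?I. snd p)" using \<open>c\<in>C\<close> by auto
    qed
  qed
  have disj: "disjoint_family_on snd ?I"
    unfolding disjoint_family_on_def
  proof (intro ballI impI)
    fix p q assume pq: "p \<in> ?I" "q \<in> ?I" "p \<noteq> q"
    obtain c e where pe: "p = (c, e)" by (cases p)
    obtain c' e' where qe: "q = (c', e')" by (cases q)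
    have h: "c \<in> C" "e \<in> dec (c \<inter> d)" "c' \<in> C" "e' \<in> dec (c' \<inter> d)" "(c, e) \<noteq> (c', e')"
      using pq pe qe by auto
    have "e \<inter> e' = {}"
    proof (cases "c = c'")
      case True
      then have "e \<noteq> e'" using h by auto
      then show ?thesis using dec(3)[OF cdR[OF h(1)]] h True by (auto simp: disjoint_def)
    next
      case False
      then have "c \<inter> c' = {}" using C(3) h by (auto simp: disjoint_def)
      moreover have "e \<subseteq> c" "e' \<subseteq> c'" using dec(4)[OF cdR[OF h(1)]] dec(4)[OF cdR[OF h(3)]] h by auto
      ultimately show ?thesis by auto
    qed
    then show "snd p \<inter> snd q = {}" using pe qe by simp
  qed
  have "f d = f (\<Union>p\<in>?I. snd p)" using Ueq by simp
  also have "\<dots> = (\<Sum>p\<in>?I. f (snd p))"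
    using fin disj decV d by (intro volume_finite_additive[OF volume_f]) (auto simp: Ueq)
  also have "\<dots> = (\<Sum>c\<in>C. g c d)"
  proof -
    have fe: "\<forall>c\<in>C. finite (dec (c \<inter> d))" using cdR dec(1) by blast
    have "(\<Sum>c\<in>C. g c d) = (\<Sum>(c,e)\<in>?I. f e)" unfolding g_def
      using sum.Sigma[OF C(2) fe, of "\<lambda>c e. f e"] by simp
    then show ?thesis by (simp add: split_beta)
  qed
  finally show ?thesis .
qed

lemma sum_eq:
  assumes C: "C \<subseteq> V" "finite C" "disjoint C" and D: "D \<subseteq> V" "finite D" "disjoint D"
    and eq: "\<Union>C = \<Union>D"
  shows "(\<Sum>d\<in>D. f d) = (\<Sum>c\<in>C. f c)"
proof -
  have "(\<Sum>d\<in>D. f d) = (\<Sum>d\<in>D. \<Sum>c\<in>C. g c d)"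
    using C D eq by (intro sum.cong refl split_sum) auto
  also have "\<dots> = (\<Sum>c\<in>C. \<Sum>d\<in>D. g c d)" by (rule sum.swap)
  also have "\<dots> = (\<Sum>c\<in>C. \<Sum>d\<in>D. g d c)" by (simp add: g_def Int_commute)
  also have "\<dots> = (\<Sum>c\<in>C. f c)"
    using C D eq by (intro sum.cong refl split_sum[symmetric]) auto
  finally show ?thesis .
qed

definition mu :: "'a set \<Rightarrow> ennreal" where "mu E = (\<Sum>c\<in>dec E. f c)"

lemma mu_eq: assumes "C \<subseteq> V" "finite C" "disjoint C" shows "mu (\<Union>C) = (\<Sum>c\<in>C. f c)"
proof -
  have R: "\<Union>C \<in> R" using assms by (auto simp: S_of_def)
  show ?thesis unfolding mu_def using dec[OF R] assms by (intro sum_eq) auto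
qed

lemma mu_V: "a \<in> V \<Longrightarrow> mu a = f a"
  using mu_eq[of "{a}"] by (simp add: disjoint_def)

lemma volume_mu: "volume R mu"
proof (intro ring_of_sets.volume_additiveI[OF ring])
  show "mu {} = 0" using mu_eq[of "{}"] by simp
next
  fix a assume "a \<in> R" then show "0 \<le> mu a" by simp
next
  fix a b assume "a \<in> R" "b \<in> R"
  then obtain Ca Cb
    where Ca: "finite Ca" "disjoint Ca" "Ca \<subseteq> V" "a = \<Union> Ca"
      and Cb: "finite Cb" "disjoint Cb" "Cb \<subseteq> V" "b = \<Union> Cb"
    by (meson S_ofE)
  assume "a \<inter> b = {}"
  with Ca Cb have "Ca \<inter> Cb \<subseteq> {{}}" by auto
  then have C_Int_cases: "Ca \<inter> Cb = {{}} \<or> Ca \<inter> Cb = {}" by auto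
  from \<open>a \<inter> b = {}\<close> have "mu (\<Union>(Ca \<union> Cb)) = (\<Sum>c\<in>Ca \<union> Cb. f c)"
    using Ca Cb by (intro mu_eq) (auto intro!: disjoint_union)
  also have "\<dots> = (\<Sum>c\<in>Ca \<union> Cb. f c) + (\<Sum>c\<in>Ca \<inter> Cb. f c)"
    using C_Int_cases f_empty by (elim disjE) simp_all
  also have "\<dots> = (\<Sum>c\<in>Ca. f c) + (\<Sum>c\<in>Cb. f c)"
    using Ca Cb by (simp add: sum.union_inter)
  also have "\<dots> = mu a + mu b"
    using Ca Cb by (simp add: mu_eq)
  finally show "mu (a \<union> b) = mu a + mu b"
    using Ca Cb by simp
qed

lemma pos_mu: "positive R mu"
  using volume_mu unfolding positive_def by (auto intro!: volume_positive volume_empty)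

end

context msp begin

lemma V_R: "A \<in> V \<Longrightarrow> A \<in> R" by (rule S_of_base)

lemma ca_mu: "countably_additive R mu"
proof (rule countably_additiveI)
  interpret G: ring_of_sets X R by (rule ring)
  fix A' :: "nat \<Rightarrow> 'a set"
  assume A': "range A' \<subseteq> R" "disjoint_family A'"
    and Un_A: "(\<Union>i. A' i) \<in> R"
  obtain C' where C': "finite C'" "C' \<subseteq> V" "disjoint C'" "\<Union> (range A') = \<Union> C'"
    using S_ofE[OF Un_A] by metis
  { fix c assume "c \<in> C'"
    moreover define A where [abs_def]: "A i = A' i \<inter> c" for i
    ultimately have A: "range A \<subseteq> R" "disjoint_family A"
      and Un_A: "(\<Union>i. A i) \<in> R"
      using A' C'
      by (auto intro!: G.Int G.finite_Union intro: V_R simp: disjoint_family_on_def)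
    from A C' \<open>c \<in> C'\<close> have UN_eq: "(\<Union>i. A i) = c"
      by (auto simp: A_def)
    have "\<forall>i::nat. \<exists>f::nat \<Rightarrow> 'a set. mu (A i) = (\<Sum>j. mu (f j)) \<and> disjoint_family f \<and> \<Union>(range f) = A i \<and> (\<forall>j. f j \<in> V)"
      (is "\<forall>i. ?P i")
    proof
      fix i
      from A have Ai: "A i \<in> R" by auto
      from S_ofE[OF this] obtain C
        where C: "finite C" "disjoint C" "C \<subseteq> V" "A i = \<Union> C" by metis
      have "\<exists>F'. bij_betw F' {..<card C} C"
        by (rule finite_same_card_bij[OF _ \<open>finite C\<close>]) auto
      then obtain F where F: "bij_betw F {..<card C} C" ..
      define f where [abs_def]: "f i = (if i < card C then F i else {})" for i
      then have f: "bij_betw f {..< card C} C"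
        by (intro bij_betw_cong[THEN iffD1, OF _ F]) auto
      with C empty_V have "\<forall>j. f j \<in> V"
        by (auto simp: Pi_iff f_def dest!: bij_betw_imp_funcset)
      moreover
      from f C have d_f: "disjoint_family_on f {..<card C}"
        by (intro disjoint_image_disjoint_family_on) (auto simp: bij_betw_def)
      then have "disjoint_family f"
        by (auto simp: disjoint_family_on_def f_def)
      moreover
      have Ai_eq: "A i = (\<Union>x<card C. f x)"
        using f C Ai unfolding bij_betw_def by auto
      then have "\<Union>(range f) = A i"
        using f by (auto simp add: f_def)
      moreover
      { have "(\<Sum>j. mu (f j)) = (\<Sum>j. if j \<in> {..< card C} then mu (f j) else 0)"
          using volume_empty[OF volume_mu] by (auto intro!: arg_cong[where f=suminf] simp: f_def)
        also have "\<dots> = (\<Sum>j<card C. mu (f j))"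
          by (rule sums_If_finite_set[THEN sums_unique, symmetric]) simp
        also have "\<dots> = mu (A i)"
          using C f[THEN bij_betw_imp_funcset] unfolding Ai_eq
          by (intro volume_finite_additive[OF volume_mu _ d_f, symmetric])
             (auto simp: Pi_iff Ai_eq intro: V_R)
        finally have "mu (A i) = (\<Sum>j. mu (f j))" .. }
      ultimately show "?P i"
        by blast
    qed
    from choice[OF this] obtain ff
      where ff: "\<forall>x. mu (A x) = (\<Sum>j. mu (ff x j)) \<and> disjoint_family (ff x) \<and> \<Union> (range (ff x)) = A x \<and> (\<forall>j. ff x j \<in> V)"
      ..
    then have UN_f_eq: "(\<Union>i. case_prod ff (prod_decode i)) = (\<Union>i. A i)"
      unfolding UN_extend_simps surj_prod_decode by (auto simp: set_eq_iff)
    have d: "disjoint_family (\<lambda>i. case_prod ff (prod_decode i))"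
      unfolding disjoint_family_on_def
    proof (intro ballI impI)
      fix m n :: nat assume "m \<noteq> n"
      then have neq: "prod_decode m \<noteq> prod_decode n"
        using inj_prod_decode[of UNIV] by (auto simp: inj_on_def)
      show "case_prod ff (prod_decode m) \<inter> case_prod ff (prod_decode n) = {}"
      proof cases
        assume "fst (prod_decode m) = fst (prod_decode n)"
        then show ?thesis
          using neq ff by (fastforce simp: disjoint_family_on_def)
      next
        assume neq: "fst (prod_decode m) \<noteq> fst (prod_decode n)"
        have "case_prod ff (prod_decode m) \<subseteq> A (fst (prod_decode m))"
          "case_prod ff (prod_decode n) \<subseteq> A (fst (prod_decode n))"
          using ff[THEN spec, of "fst (prod_decode m)"]
          using ff[THEN spec, of "fst (prod_decode n)"]
          by (auto simp: set_eq_iff)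
        with ff A neq show ?thesis
          by (fastforce simp: disjoint_family_on_def subset_eq set_eq_iff)
      qed
    qed
    from ff have "(\<Sum>n. mu (A n)) = (\<Sum>n. mu (case_prod ff (prod_decode n)))"
      by (intro suminf_ennreal_2dimen[symmetric] V_R)
       (auto split: prod.split)
    also have "\<dots> = (\<Sum>n. f (case_prod ff (prod_decode n)))"
      using ff mu_V by (auto intro!: arg_cong[where f=suminf] split: prod.split)
    also have "\<dots> = f (\<Union>i. case_prod ff (prod_decode i))"
      using ff \<open>c \<in> C'\<close> C'
      by (intro ca_f[unfolded countably_additive_def, rule_format])
         (auto split: prod.split simp: UN_f_eq d UN_eq)
    finally have "(\<Sum>n. mu (A' n \<inter> c)) = mu c"
      using UN_f_eq UN_eq \<open>c \<in> C'\<close> C' mu_V by (simp add: A_def subset_eq) }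
  note eq = this
  have "(\<Sum>n. mu (A' n)) = (\<Sum>n. \<Sum>c\<in>C'. mu (A' n \<inter> c))"
    using C' A'
    by (subst volume_finite_additive[symmetric, OF volume_mu])
       (auto simp: disjoint_def disjoint_family_on_def
             intro!: G.Int G.finite_Union arg_cong[where f="\<lambda>X. suminf (\<lambda>i. mu (X i))"] ext
             intro: V_R)
  also have "\<dots> = (\<Sum>c\<in>C'. \<Sum>n. mu (A' n \<inter> c))"
    using C' A'
    by (intro suminf_sum G.Int G.finite_Union) (auto intro: V_R)
  also have "\<dots> = (\<Sum>c\<in>C'. mu c)"
    using eq C' by (auto intro!: sum.cong)
  also have "\<dots> = mu (\<Union>C')"
    using C' Un_A
    by (subst volume_finite_additive[symmetric, OF volume_mu])
       (auto simp: disjoint_family_on_def disjoint_def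
             intro: V_R)
  finally show "(\<Sum>n. mu (A' n)) = mu (\<Union>i. A' i)"
    using C' by simp
qed

end

context msp begin

definition Om where "Om = outer_measure R mu"

lemma inc_mu: "increasing R mu"
  using ring_of_sets.additive_increasing[OF ring pos_mu]
    ring_of_sets.countably_additive_additive[OF ring pos_mu ca_mu] by blast

lemma RX: "R \<subseteq> Pow X" using ring by (simp add: ring_of_sets_iff)

lemma ms_Om: "measure_space X (sigma_sets X R) Om"
proof -
  interpret G: ring_of_sets X R by (rule ring)
  let ?O = "outer_measure R mu"
  define ls where "ls = lambda_system X (Pow X) ?O"
  have mls: "measure_space X ls ?O"
    using sigma_algebra.caratheodory_lemma
            [OF sigma_algebra_Pow G.outer_measure_space_outer_measure [OF pos_mu inc_mu]]
    by (simp add: ls_def)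
  hence sls: "sigma_algebra X ls"
    by (simp add: measure_space_def)
  have "R \<subseteq> ls"
    by (simp add: ls_def)
       (metis ca_mu pos_mu inc_mu G.countably_additive_additive G.algebra_subset_lambda_system)
  hence sgs_sb: "sigma_sets X R \<subseteq> ls"
    using sigma_algebra.sigma_sets_subset [OF sls, of "R"]
    by simp
  show ?thesis unfolding Om_def
    by (rule measure_down [OF mls], rule sigma_algebra_sigma_sets)
       (simp_all add: sgs_sb G.space_closed)
qed

lemma Om_R: "s \<in> R \<Longrightarrow> Om s = mu s"
  unfolding Om_def by (rule ring_of_sets.outer_measure_agrees[OF ring pos_mu ca_mu])

definition Mm where "Mm = measure_of X (sigma_sets X R) Om"

lemma sets_Mm[simp]: "sets Mm = sigma_sets X R"
  unfolding Mm_def by (rule sigma_algebra.sets_measure_of_eq[OF sigma_algebra_sigma_sets[OF RX]])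
lemma space_Mm[simp]: "space Mm = X"
  unfolding Mm_def by (rule sigma_algebra.space_measure_of_eq[OF sigma_algebra_sigma_sets[OF RX]])

lemma emeasure_Mm: "A \<in> sigma_sets X R \<Longrightarrow> emeasure Mm A = Om A"
  unfolding Mm_def using ms_Om
  by (intro emeasure_measure_of_sigma) (auto simp: measure_space_def)

lemma R_sets: "A \<in> R \<Longrightarrow> A \<in> sets Mm" by auto
lemma V_sets: "A \<in> V \<Longrightarrow> A \<in> sets Mm" by (auto intro: V_R)

lemma emeasure_V: "A \<in> V \<Longrightarrow> emeasure Mm A = ennreal (v A)"
  by (simp add: emeasure_Mm V_R Om_R mu_V f_def)

lemma measure_V: "A \<in> V \<Longrightarrow> measure Mm A = v A"
  by (simp add: measure_def emeasure_V v_nonneg)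

lemma fin_Mm: "finite_measure Mm"
  by (rule finite_measureI) (simp add: emeasure_V XV)



definition lst :: "'a set \<Rightarrow> 'a set list" where
  "lst E = (SOME xs. set xs = dec E \<and> distinct xs)"

definition pc :: "'a set \<Rightarrow> nat \<Rightarrow> 'a set" where
  "pc E j = (if j < length (lst E) then lst E ! j else {})"

lemma lst: assumes "E \<in> R" shows "set (lst E) = dec E" "distinct (lst E)"
proof -
  have "\<exists>xs. set xs = dec E \<and> distinct xs" using dec(1)[OF assms] by (rule finite_distinct_list)
  from someI_ex[OF this] show "set (lst E) = dec E" "distinct (lst E)" unfolding lst_def by auto
qed

lemma pc_V: "E \<in> R \<Longrightarrow> pc E j \<in> V"
  using lst[of E] dec[of E] empty_V by (auto simp: pc_def)

lemma pc_Un: assumes "E \<in> R" shows "(\<Union>j. pc E j) = E"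
proof -
  have "(\<Union>j. pc E j) = \<Union>(set (lst E))"
    by (auto simp: pc_def set_conv_nth split: if_split_asm)
  then show ?thesis using lst[OF assms] dec(4)[OF assms] by simp
qed

lemma pc_sum: assumes "E \<in> R" shows "(\<Sum>j. f (pc E j)) = mu E"
proof -
  have "(\<Sum>j. f (pc E j)) = (\<Sum>j<length (lst E). f (pc E j))"
    by (rule suminf_finite) (auto simp: pc_def f_empty)
  also have "\<dots> = (\<Sum>j<length (lst E). f (lst E ! j))" by (simp add: pc_def)
  also have "\<dots> = (\<Sum>c\<in>set (lst E). f c)"
    by (rule sum.reindex_bij_betw[OF bij_betw_nth[OF lst(2)[OF assms] refl refl]])
  also have "\<dots> = mu E" unfolding mu_def using lst[OF assms] by simp
  finally show ?thesis .
qed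

lemma pc_disj: assumes "E \<in> R" shows "disjoint_family (pc E)"
  unfolding disjoint_family_on_def
proof (intro ballI impI)
  fix i j :: nat assume ij: "i \<noteq> j"
  show "pc E i \<inter> pc E j = {}"
  proof (cases "i < length (lst E) \<and> j < length (lst E)")
    case True
    have d: "distinct (lst E)" and st: "set (lst E) = dec E" using lst[OF assms] by auto
    have ne: "lst E ! i \<noteq> lst E ! j" using d True ij by (simp add: nth_eq_iff_index_eq)
    have i1: "lst E ! i \<in> dec E" using nth_mem[of i "lst E"] True st by simp
    have j1: "lst E ! j \<in> dec E" using nth_mem[of j "lst E"] True st by simp
    have "lst E ! i \<inter> lst E ! j = {}" by (rule disjointD[OF dec(3)[OF assms] i1 j1 ne])
    moreover have "pc E i = lst E ! i" "pc E j = lst E ! j" using True by (simp_all add: pc_def)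
    ultimately show ?thesis by simp
  next
    case False
    then have "pc E i = {} \<or> pc E j = {}" by (auto simp: pc_def)
    then show ?thesis by blast
  qed
qed

lemma cover_V:
  assumes "Y \<subseteq> X" "Om Y < ennreal e"
  shows "\<exists>G. range G \<subseteq> V \<and> Y \<subseteq> (\<Union>k. G k) \<and> summable (\<lambda>k. v (G k)) \<and> (\<Sum>k. v (G k)) < e"
proof -
  obtain F where F: "range F \<subseteq> R" "disjoint_family F" "Y \<subseteq> (\<Union>i. F i)" "(\<Sum>i. mu (F i)) < ennreal e"
    using ring_of_sets.outer_measure_close[OF ring, of mu Y "ennreal e"] assms unfolding Om_def by blast
  have FR: "F i \<in> R" for i using F(1) by auto
  define G where "G k = case_prod (\<lambda>i j. pc (F i) j) (prod_decode k)" for k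
  have GV: "range G \<subseteq> V" using pc_V FR by (auto simp: G_def split: prod.split)
  have "(\<Sum>k. f (G k)) = (\<Sum>i. mu (F i))"
    unfolding G_def
    by (rule suminf_ennreal_2dimen[where f="\<lambda>p. f (case_prod (\<lambda>i j. pc (F i) j) p)"])
       (simp add: pc_sum[OF FR])
  also have "\<dots> < ennreal e" using F(4) .
  finally have lt: "(\<Sum>k. ennreal (v (G k))) < ennreal e" by (simp add: f_def)
  have vn: "\<And>k. 0 \<le> v (G k)" using GV v_nonneg by auto
  have nt: "(\<Sum>k. ennreal (v (G k))) \<noteq> top" using lt by (auto simp: top_unique)
  have sm: "summable (\<lambda>k. v (G k))" using summable_suminf_not_top[OF vn nt] .
  have "ennreal (\<Sum>k. v (G k)) < ennreal e" using lt suminf_ennreal[OF vn nt] by simp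
  then have "(\<Sum>k. v (G k)) < e" using ennreal_less_iff[OF suminf_nonneg[OF sm vn]] by blast
  moreover have "Y \<subseteq> (\<Union>k. G k)"
  proof
    fix x assume "x \<in> Y"
    then obtain i where "x \<in> F i" using F(3) by auto
    then obtain j where "x \<in> pc (F i) j" using pc_Un[OF FR] by blast
    then have "x \<in> G (prod_encode (i,j))" by (simp add: G_def)
    then show "x \<in> (\<Union>k. G k)" by blast
  qed
  ultimately show ?thesis using GV sm by blast
qed

end

lemma small_zero: fixes x :: real assumes "\<And>k::nat. x < 1 / Suc k" "0 \<le> x" shows "x = 0"
proof (rule ccontr)
  assume "x \<noteq> 0" then have "0 < x" using assms(2) by simp
  then obtain n where "inverse (real (Suc n)) < x" using reals_Archimedean by blast
  then show False using assms(1)[of n] by (simp add: inverse_eq_divide)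
qed

context msp begin

declare sets_Mm[simp del]

lemma fin_em: "emeasure Mm A \<noteq> \<infinity>" using finite_measure.emeasure_finite[OF fin_Mm] by simp

lemma sets_X: "A \<in> sets Mm \<Longrightarrow> A \<subseteq> X"
  using sets.sets_into_space[of A Mm] by simp

lemma meas_UN_le:
  assumes G: "range G \<subseteq> V" "summable (\<lambda>k. v (G k))"
  shows "measure Mm (\<Union>k. G k) \<le> (\<Sum>k. v (G k))"
proof -
  have vn: "\<And>k. 0 \<le> v (G k)" using G v_nonneg by auto
  have "(\<Sum>k. emeasure Mm (G k)) = (\<Sum>k. ennreal (v (G k)))"
    using G by (simp add: emeasure_V subset_eq)
  also have "\<dots> \<noteq> \<infinity>" using ennreal_suminf_neq_top[OF G(2) vn] by simp
  finally have "measure Mm (\<Union>k. G k) \<le> (\<Sum>k. measure Mm (G k))"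
    using G by (intro measure_subadditive_countably) (auto intro: V_sets)
  also have "\<dots> = (\<Sum>k. v (G k))" using G by (simp add: measure_V subset_eq)
  finally show ?thesis .
qed

lemma null_imp:
  assumes "null_set V v D" shows "\<exists>N\<in>sets Mm. D \<subseteq> N \<and> measure Mm N = 0"
proof -
  have "\<forall>k::nat. \<exists>At. range At \<subseteq> V \<and> D \<subseteq> (\<Union>t. At t) \<and> summable (\<lambda>t. v (At t)) \<and> (\<Sum>t. v (At t)) < 1 / Suc k"
    using assms unfolding null_set_def by auto
  then obtain At where At: "\<And>k. range (At k) \<subseteq> V" "\<And>k. D \<subseteq> (\<Union>t. At k t)"
    "\<And>k. summable (\<lambda>t. v (At k t))" "\<And>k. (\<Sum>t. v (At k t)) < 1 / Suc k"
    by metis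
  define N where "N = (\<Inter>k. \<Union>t. At k t)"
  have Usets: "(\<Union>t. At k t) \<in> sets Mm" for k
  proof -
    have "range (At k) \<subseteq> sets Mm" using At(1)[of k] V_sets by blast
    then show ?thesis by (rule sets.countable_UN)
  qed
  have Nsets: "N \<in> sets Mm" unfolding N_def using Usets by (intro sets.countable_INT) auto
  have "measure Mm N < 1 / Suc k" for k
  proof -
    have "measure Mm N \<le> measure Mm (\<Union>t. At k t)"
      using Usets by (intro finite_measure.finite_measure_mono[OF fin_Mm]) (auto simp: N_def)
    also have "\<dots> \<le> (\<Sum>t. v (At k t))" using At by (intro meas_UN_le) auto
    finally show ?thesis using At(4)[of k] by linarith
  qed
  then have "measure Mm N = 0"
    by (rule small_zero) auto
  moreover have "D \<subseteq> N" using At(2) by (auto simp: N_def)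
  ultimately show ?thesis using Nsets by blast
qed

lemma imp_null:
  assumes N: "N \<in> sets Mm" "measure Mm N = 0" and D: "D \<subseteq> N" shows "null_set V v D"
  unfolding null_set_def
proof (intro allI impI)
  fix e :: real assume "0 < e"
  have "Om N = emeasure Mm N" using N by (simp add: emeasure_Mm sets_Mm)
  also have "\<dots> = 0" using N by (simp add: finite_measure.emeasure_eq_measure[OF fin_Mm])
  finally have "Om N < ennreal e" using \<open>0 < e\<close> by simp
  from cover_V[OF sets_X[OF N(1)] this] obtain G where
    "range G \<subseteq> V" "N \<subseteq> (\<Union>k. G k)" "summable (\<lambda>k. v (G k))" "(\<Sum>k. v (G k)) < e" by blast
  then show "\<exists>At. range At \<subseteq> V \<and> D \<subseteq> (\<Union>t. At t) \<and> summable (\<lambda>t. v (At t)) \<and> (\<Sum>t. v (At t)) < e"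
    using D by blast
qed

lemma null_iff: "null_set V v D \<longleftrightarrow> (\<exists>N\<in>sets Mm. D \<subseteq> N \<and> measure Mm N = 0)"
  using null_imp imp_null by blast

lemma null_subset: "null_set V v D \<Longrightarrow> D' \<subseteq> D \<Longrightarrow> null_set V v D'"
  unfolding null_iff by blast

lemma null_Un: assumes "null_set V v D1" "null_set V v D2" shows "null_set V v (D1 \<union> D2)"
proof -
  obtain N1 N2 where N: "N1 \<in> sets Mm" "D1 \<subseteq> N1" "measure Mm N1 = 0" "N2 \<in> sets Mm" "D2 \<subseteq> N2" "measure Mm N2 = 0"
    using assms unfolding null_iff by blast
  have "measure Mm (N1 \<union> N2) \<le> measure Mm N1 + measure Mm N2"
    using N fin_em by (intro measure_subadditive) auto
  then have "measure Mm (N1 \<union> N2) = 0" using N measure_nonneg[of Mm "N1 \<union> N2"] by linarith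
  then show ?thesis unfolding null_iff using N by (intro bexI[of _ "N1 \<union> N2"]) auto
qed

lemma sigma_of_sets: "W \<subseteq> sets Mm \<Longrightarrow> sigma_of W \<subseteq> sets Mm"
  unfolding sigma_of_def by (auto intro!: sets.countable_UN)

lemma delta_of_sets: "W \<subseteq> sets Mm \<Longrightarrow> delta_of W \<subseteq> sets Mm"
  unfolding delta_of_def by (auto intro!: sets.countable_INT)

lemma outer_approx:
  assumes B: "B \<in> sets Mm"
  shows "\<exists>B'\<in>delta_of (sigma_of V). B \<subseteq> B' \<and> B' \<in> sets Mm \<and> measure Mm (B' - B) = 0"
proof -
  have "\<forall>k::nat. \<exists>G. range G \<subseteq> V \<and> B \<subseteq> (\<Union>t. G t) \<and> summable (\<lambda>t. v (G t)) \<and> (\<Sum>t. v (G t)) < measure Mm B + 1 / Suc k"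
  proof
    fix k :: nat
    have "Om B = ennreal (measure Mm B)"
      using B by (simp add: emeasure_Mm[symmetric] sets_Mm finite_measure.emeasure_eq_measure[OF fin_Mm])
    also have "\<dots> < ennreal (measure Mm B + 1 / Suc k)"
      by (intro ennreal_lessI) (auto intro: add_nonneg_pos)
    finally show "\<exists>G. range G \<subseteq> V \<and> B \<subseteq> (\<Union>t. G t) \<and> summable (\<lambda>t. v (G t)) \<and> (\<Sum>t. v (G t)) < measure Mm B + 1 / Suc k"
      using cover_V[OF sets_X[OF B]] by blast
  qed
  then obtain G where G: "\<And>k. range (G k) \<subseteq> V" "\<And>k. B \<subseteq> (\<Union>t. G k t)"
    "\<And>k. summable (\<lambda>t. v (G k t))" "\<And>k. (\<Sum>t. v (G k t)) < measure Mm B + 1 / Suc k"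
    by metis
  define U where "U k = (\<Union>t. G k t)" for k
  define B' where "B' = (\<Inter>k. U k)"
  have Usets: "U k \<in> sets Mm" for k
  proof -
    have "range (G k) \<subseteq> sets Mm" using G(1)[of k] V_sets by blast
    then show ?thesis unfolding U_def by (rule sets.countable_UN)
  qed
  have Bs: "B' \<in> sets Mm" unfolding B'_def using Usets by (intro sets.countable_INT) auto
  have UV: "U k \<in> sigma_of V" for k unfolding U_def sigma_of_def using G(1) by blast
  have B'd: "B' \<in> delta_of (sigma_of V)" unfolding B'_def delta_of_def using UV by blast
  have sub: "B \<subseteq> B'" using G(2) by (auto simp: B'_def U_def)
  have "measure Mm (B' - B) < 1 / Suc k" for k
  proof -
    have "measure Mm (B' - B) = measure Mm B' - measure Mm B"
      using Bs B sub by (intro finite_measure.finite_measure_Diff[OF fin_Mm])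
    also have "measure Mm B' \<le> measure Mm (U k)"
      using Usets Bs by (intro finite_measure.finite_measure_mono[OF fin_Mm]) (auto simp: B'_def)
    also have "measure Mm (U k) \<le> (\<Sum>t. v (G k t))" unfolding U_def using G by (intro meas_UN_le) auto
    finally show ?thesis using G(4)[of k] by linarith
  qed
  then have "measure Mm (B' - B) = 0"
    by (rule small_zero) auto
  then show ?thesis using B'd sub Bs by blast
qed

end

lemma sum_split_lt: "(\<Sum>i<m+n. g i) = (\<Sum>i<m. g i) + (\<Sum>i<n. g (m+i)) "
  for g :: "nat \<Rightarrow> 'b::comm_monoid_add"
  by (induct n) (simp_all add: ac_simps)

context msp begin

lemma simple_rep_int:
  assumes "simple_rep V h n r A" shows "(\<Sum>i<n. r i * v (A i)) = integral\<^sup>L Mm h"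
proof -
  have AV: "\<And>i. i < n \<Longrightarrow> A i \<in> V" and h: "h = (\<lambda>x. \<Sum>i<n. r i * indicator (A i) x)"
    using assms by (auto simp: simple_rep_def)
  have int: "integrable Mm (\<lambda>x. r i * indicator (A i) x)" if "i < n" for i
  proof -
    have "integrable Mm (indicator (A i) :: 'a \<Rightarrow> real)"
      using V_sets[OF AV[OF that]] fin_em[of "A i"] by (simp add: less_top)
    then show ?thesis by (rule integrable_mult_right)
  qed
  have "integral\<^sup>L Mm h = (\<Sum>i<n. integral\<^sup>L Mm (\<lambda>x. r i * indicator (A i) x))"
    unfolding h by (rule Bochner_Integration.integral_sum[where f="\<lambda>i x. r i * indicator (A i) x"]) (rule int, simp)
  also have "\<dots> = (\<Sum>i<n. r i * v (A i))"
  proof (intro sum.cong refl)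
    fix i assume "i \<in> {..<n}"
    then have "A i \<in> V" using AV by auto
    then have "A i \<inter> X = A i" using VX by auto
    then show "integral\<^sup>L Mm (\<lambda>x. r i * indicator (A i) x) = r i * v (A i)"
      using \<open>A i \<in> V\<close> by (simp add: measure_V)
  qed
  finally show ?thesis by simp
qed

lemma simple_int_eq: assumes "simple_fun V h" shows "simple_int V v h = integral\<^sup>L Mm h"
proof -
  have ex: "\<exists>s. \<exists>n r A. simple_rep V h n r A \<and> s = (\<Sum>i<n. r i * v (A i))"
    using assms by (auto simp: simple_fun_def)
  from someI_ex[OF ex] obtain n r A where "simple_rep V h n r A" "simple_int V v h = (\<Sum>i<n. r i * v (A i))"
    unfolding simple_int_def by blast
  then show ?thesis using simple_rep_int by simp
qed

lemma ind_pc: assumes "E \<in> R" shows "indicator E x = (\<Sum>j<length (lst E). indicator (pc E j) x :: real)"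
proof -
  have "E = (\<Union>j\<in>{..<length (lst E)}. pc E j)"
    using pc_Un[OF assms] by (auto simp: pc_def split: if_split_asm)
  then have "indicator E x = (indicator (\<Union>j\<in>{..<length (lst E)}. pc E j) x :: real)" by simp
  also have "\<dots> = (\<Sum>j<length (lst E). indicator (pc E j) x)"
    using pc_disj[OF assms] by (intro indicator_UN_disjoint) (auto simp: disjoint_family_on_def)
  finally show ?thesis .
qed

lemma two_simple:
  assumes E: "E1 \<in> R" "E2 \<in> R" "E1 \<inter> E2 = {}"
  shows "simple_fun V (\<lambda>x. a * indicator E1 x + b * indicator E2 x)"
proof -
  define L1 where "L1 = length (lst E1)"
  define L2 where "L2 = length (lst E2)"
  define A where "A i = (if i < L1 then pc E1 i else pc E2 (i - L1))" for i
  define r where "r i = (if i < L1 then a else b)" for i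
  have AV: "\<forall>i<L1+L2. A i \<in> V" using pc_V E by (auto simp: A_def)
  have disj: "disjoint_family_on A {..<L1+L2}"
    unfolding disjoint_family_on_def
  proof (intro ballI impI)
    fix i j assume ij: "i \<in> {..<L1+L2}" "j \<in> {..<L1+L2}" "i \<noteq> j"
    have s1: "pc E1 k \<subseteq> E1" for k using pc_Un[OF E(1)] by blast
    have s2: "pc E2 k \<subseteq> E2" for k using pc_Un[OF E(2)] by blast
    show "A i \<inter> A j = {}"
    proof (cases "i < L1"; cases "j < L1")
      assume "i < L1" "j < L1"
      then show ?thesis using pc_disj[OF E(1)] ij by (auto simp: A_def disjoint_family_on_def)
    next
      assume "\<not> i < L1" "\<not> j < L1"
      then have "i - L1 \<noteq> j - L1" using ij by auto
      then show ?thesis using pc_disj[OF E(2)] \<open>\<not> i < L1\<close> \<open>\<not> j < L1\<close>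
        by (auto simp: A_def disjoint_family_on_def)
    next
      assume "i < L1" "\<not> j < L1"
      then show ?thesis using s1[of i] s2[of "j - L1"] E(3) by (auto simp: A_def)
    next
      assume "\<not> i < L1" "j < L1"
      then show ?thesis using s1[of j] s2[of "i - L1"] E(3) by (auto simp: A_def)
    qed
  qed
  have eq: "(\<lambda>x. a * indicator E1 x + b * indicator E2 x) = (\<lambda>x. \<Sum>i<L1+L2. r i * indicator (A i) x)"
  proof
    fix x
    have "(\<Sum>i<L1+L2. r i * indicator (A i) x) = (\<Sum>i<L1. r i * indicator (A i) x) + (\<Sum>i<L2. r (L1 + i) * indicator (A (L1 + i)) x)"
      by (rule sum_split_lt) 
    also have "\<dots> = (\<Sum>i<L1. a * indicator (pc E1 i) x) + (\<Sum>i<L2. b * indicator (pc E2 i) x)"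
      by (simp add: r_def A_def)
    also have "\<dots> = a * indicator E1 x + b * indicator E2 x"
      by (simp add: ind_pc[OF E(1)] ind_pc[OF E(2)] sum_distrib_left L1_def L2_def)
    finally show "a * indicator E1 x + b * indicator E2 x = (\<Sum>i<L1+L2. r i * indicator (A i) x)" by simp
  qed
  show ?thesis unfolding simple_fun_def simple_rep_def
    using AV disj eq by blast
qed

lemma two_int:
  assumes E: "E1 \<in> R" "E2 \<in> R" "E1 \<inter> E2 = {}"
  shows "simple_int V v (\<lambda>x. a * indicator E1 x + b * indicator E2 x) = a * measure Mm E1 + b * measure Mm E2"
proof -
  have s: "E1 \<in> sets Mm" "E2 \<in> sets Mm" using E by (auto intro: R_sets)
  have X: "E1 \<inter> X = E1" "E2 \<inter> X = E2" using E RX by auto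
  show ?thesis using simple_int_eq[OF two_simple[OF E]] s fin_em X
    by (simp add: less_top)
qed

end


lemma pow4: "real (Suc m) \<le> 4 ^ m"
proof (induction m)
  case (Suc m)
  have "real (Suc (Suc m)) \<le> 4 * real (Suc m)" by simp
  also have "\<dots> \<le> 4 * 4 ^ m" using Suc by simp
  finally show ?case by simp
qed simp

context msp begin

lemma ring_approx:
  assumes B: "B \<in> sets Mm" and e: "0 < e"
  shows "\<exists>P\<in>R. measure Mm (symdiff P B) < e"
proof -
  have "Om B = ennreal (measure Mm B)"
    using B by (simp add: emeasure_Mm[symmetric] sets_Mm finite_measure.emeasure_eq_measure[OF fin_Mm])
  also have "\<dots> < ennreal (measure Mm B + e/2)"
    using e by (intro ennreal_lessI) (auto intro: add_nonneg_pos)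
  finally obtain G where G: "range G \<subseteq> V" "B \<subseteq> (\<Union>k. G k)" "summable (\<lambda>k. v (G k))"
      "(\<Sum>k. v (G k)) < measure Mm B + e/2"
    using cover_V[OF sets_X[OF B]] by blast
  define U where "U = (\<Union>k. G k)"
  have GS: "range G \<subseteq> sets Mm" using G(1) V_sets by blast
  then have US: "U \<in> sets Mm" unfolding U_def by (rule sets.countable_UN)
  have mU: "measure Mm U \<le> (\<Sum>k. v (G k))" unfolding U_def using G by (intro meas_UN_le)
  define Q where "Q N = (\<Union>k\<in>{0..<N}. G k)" for N
  have QR: "Q N \<in> R" for N
    unfolding Q_def using G(1) by (intro ring_of_sets.finite_UN[OF ring]) (auto intro: V_R)
  have QS: "range Q \<subseteq> sets Mm" using QR R_sets by blast
  have inc: "incseq Q" unfolding incseq_def Q_def by (intro allI impI UN_mono) auto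
  have QU: "(\<Union>N. Q N) = U" unfolding Q_def U_def by (rule UN_UN_finite_eq)
  have "(\<lambda>N. measure Mm (Q N)) \<longlonglongrightarrow> measure Mm U"
    using finite_measure.finite_Lim_measure_incseq[OF fin_Mm QS inc] QU by simp
  then have "eventually (\<lambda>N. measure Mm U - e/2 < measure Mm (Q N)) sequentially"
    using e by (intro order_tendstoD) auto
  then obtain N where N: "measure Mm U - e/2 < measure Mm (Q N)" by (auto simp: eventually_sequentially)
  have QsU: "Q N \<subseteq> U" using QU by blast
  have BU: "B \<subseteq> U" using G(2) by (simp add: U_def)
  have "measure Mm (symdiff (Q N) B) \<le> measure Mm ((U - B) \<union> (U - Q N))"
    using QsU BU QR[of N] B US
    by (intro finite_measure.finite_measure_mono[OF fin_Mm]) (auto simp: symdiff_def intro: R_sets)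
  also have "\<dots> \<le> measure Mm (U - B) + measure Mm (U - Q N)"
    using B US QR[of N] fin_em by (intro measure_subadditive) (auto intro: R_sets)
  also have "measure Mm (U - B) = measure Mm U - measure Mm B"
    using B US BU by (intro finite_measure.finite_measure_Diff[OF fin_Mm])
  also have "measure Mm (U - Q N) = measure Mm U - measure Mm (Q N)"
    using QS US QsU by (intro finite_measure.finite_measure_Diff[OF fin_Mm]) auto
  finally have "measure Mm (symdiff (Q N) B) < e" using N mU G(4) by linarith
  then show ?thesis using QR by blast
qed


lemma geo_bound: "(\<Sum>j. (1/4::real) ^ (j + Suc m)) = (1/4) ^ m / 3"
proof -
  have "(\<Sum>j. (1/4::real) ^ (j + Suc m)) = (\<Sum>j. (1/4) ^ Suc m * (1/4) ^ j)"
    by (simp add: power_add mult.commute)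
  also have "\<dots> = (1/4) ^ Suc m * (\<Sum>j. (1/4::real) ^ j)"
    by (rule suminf_mult) (rule summable_geometric, simp)
  also have "(\<Sum>j. (1/4::real) ^ j) = 4/3" by (subst suminf_geometric) auto
  finally show ?thesis by simp
qed

lemma geo_summable: "summable (\<lambda>j. (1/4::real) ^ (j + Suc m))"
  using summable_mult[OF summable_geometric[of "1/4::real"], of "(1/4)^Suc m"]
  by (simp add: power_add mult.commute)

lemma geo_small: "(1/4::real) ^ m / 3 < 1 / Suc m"
proof -
  have "real (Suc m) \<le> 4 ^ m" by (rule pow4)
  then have "real (Suc m) < 3 * 4 ^ m" by simp
  then show ?thesis by (simp add: power_one_over field_simps)
qed

lemma sig_Vc:
  assumes B: "B \<in> sets Mm" and D: "null_set V v D" and A: "A = symdiff B D" "A \<subseteq> X"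
  shows "A \<in> V_c X V v"
proof -
  have "\<forall>n::nat. \<exists>P\<in>R. measure Mm (symdiff P B) < 1/4^n" using ring_approx[OF B] by simp
  then obtain Q where Q: "\<And>n. Q n \<in> R" "\<And>n. measure Mm (symdiff (Q n) B) < 1/4^n" by metis
  define P where "P n = (if n = 0 then {} else Q n)" for n
  have PR: "P n \<in> R" for n by (cases "n = 0") (auto simp: P_def Q(1) S_of_empty)
  have PS: "P n \<in> sets Mm" for n using PR R_sets by blast
  have sdS: "symdiff (P n) B \<in> sets Mm" for n using PS B by (auto simp: symdiff_def)
  define c where "c = measure Mm X"
  have XS: "X \<in> sets Mm" using sets.top[of Mm] by simp
  have mB: "measure Mm B \<le> c" unfolding c_def
    using B XS sets_X[OF B] by (intro finite_measure.finite_measure_mono[OF fin_Mm])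
  have c0: "0 \<le> c" by (simp add: c_def)
  have Pb: "measure Mm (symdiff (P n) B) \<le> 4 * (1 + c) / 4 ^ n" for n
  proof (cases "n = 0")
    case True
    then show ?thesis using mB c0 by (simp add: P_def symdiff_def)
  next
    case False
    then have "measure Mm (symdiff (P n) B) < 1 / 4 ^ n" using Q(2) by (simp add: P_def)
    also have "\<dots> \<le> 4 * (1 + c) / 4 ^ n" using c0 by (intro divide_right_mono) auto
    finally show ?thesis by simp
  qed
  define h where "h n = (\<lambda>x. indicator (P n) x - indicator (P (n - 1)) x :: real)" for n
  define s where "s n = (\<lambda>x. \<Sum>k\<in>{1..n}. h k x)" for n
  have s_eq: "s n x = indicator (P n) x" for n x
  proof (induction n)
    case 0 then show ?case by (simp add: s_def P_def)
  next
    case (Suc n)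
    have "s (Suc n) x = s n x + h (Suc n) x" by (simp add: s_def)
    then show ?case using Suc by (simp add: h_def)
  qed
  define Mc where "Mc = 20 * (1 + c)"
  have hn: "simple_fun V (h n) \<and> simple_norm V v (h n) \<le> Mc / 4 ^ n" if n1: "n \<ge> 1" for n
  proof -
    define E1 where "E1 = P n - P (n - 1)"
    define E2 where "E2 = P (n - 1) - P n"
    have E: "E1 \<in> R" "E2 \<in> R" "E1 \<inter> E2 = {}" using PR S_Diff[OF pr] by (auto simp: E1_def E2_def)
    have h_eq: "h n = (\<lambda>x. 1 * indicator E1 x + (-1) * indicator E2 x)"
      by (auto simp: h_def E1_def E2_def indicator_def fun_eq_iff)
    have a_eq: "(\<lambda>x. \<bar>h n x\<bar>) = (\<lambda>x. 1 * indicator E1 x + 1 * indicator E2 x)"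
      by (auto simp: h_def E1_def E2_def indicator_def fun_eq_iff)
    have sf: "simple_fun V (h n)" unfolding h_eq by (rule two_simple[OF E])
    have "simple_norm V v (h n) = measure Mm E1 + measure Mm E2"
      unfolding simple_norm_def a_eq using two_int[OF E, of 1 1] by simp
    also have "\<dots> = measure Mm (E1 \<union> E2)"
      using E R_sets by (intro finite_measure.finite_measure_Union[OF fin_Mm, symmetric]) auto
    also have "\<dots> \<le> measure Mm (symdiff (P n) B \<union> symdiff (P (n - 1)) B)"
      using sdS by (intro finite_measure.finite_measure_mono[OF fin_Mm])
        (auto simp: E1_def E2_def symdiff_def)
    also have "\<dots> \<le> measure Mm (symdiff (P n) B) + measure Mm (symdiff (P (n - 1)) B)"
      using sdS fin_em by (intro measure_subadditive) auto
    also have "\<dots> \<le> 4 * (1 + c) / 4 ^ n + 4 * (1 + c) / 4 ^ (n - 1)"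
      using Pb by (intro add_mono) auto
    also have "\<dots> = Mc / 4 ^ n"
    proof -
      obtain m where m: "n = Suc m" using n1 by (cases n) auto
      show ?thesis unfolding m Mc_def by (simp add: field_simps)
    qed
    finally show ?thesis using sf by simp
  qed
  have bs: "basic_seq V v s"
    unfolding basic_seq_def using hn s_def by blast
  define E where "E m = (\<Union>j. symdiff (P (j + Suc m)) B)" for m
  have ES: "E m \<in> sets Mm" for m
  proof -
    have "range (\<lambda>j. symdiff (P (j + Suc m)) B) \<subseteq> sets Mm" using sdS by blast
    then show ?thesis unfolding E_def by (rule sets.countable_UN)
  qed
  have mE: "measure Mm (E m) < 1 / Suc m" for m
  proof -
    have le: "measure Mm (symdiff (P (j + Suc m)) B) \<le> (1/4) ^ (j + Suc m)" for j
      using Q(2)[of "j + Suc m"] by (simp add: P_def power_one_over)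
    have le': "\<exists>N. \<forall>j\<ge>N. norm (measure Mm (symdiff (P (j + Suc m)) B)) \<le> (1/4::real) ^ (j + Suc m)"
      using le by simp
    have sm: "summable (\<lambda>j. measure Mm (symdiff (P (j + Suc m)) B))"
      by (rule summable_comparison_test[OF le' geo_summable])
    have "(\<Sum>j. emeasure Mm (symdiff (P (j + Suc m)) B)) = (\<Sum>j. ennreal (measure Mm (symdiff (P (j + Suc m)) B)))"
      by (simp add: finite_measure.emeasure_eq_measure[OF fin_Mm])
    also have "\<dots> \<noteq> \<infinity>"
      using ennreal_suminf_neq_top[OF sm measure_nonneg] unfolding infinity_ennreal_def .
    finally have "measure Mm (E m) \<le> (\<Sum>j. measure Mm (symdiff (P (j + Suc m)) B))"
      unfolding E_def using sdS by (intro measure_subadditive_countably) auto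
    also have "\<dots> \<le> (\<Sum>j. (1/4::real) ^ (j + Suc m))"
      using le sm geo_summable by (intro suminf_le) auto
    also have "\<dots> = (1/4) ^ m / 3" by (rule geo_bound)
    also have "\<dots> < 1 / Suc m" by (rule geo_small)
    finally show ?thesis .
  qed
  define N where "N = (\<Inter>m. E m)"
  have NS: "N \<in> sets Mm" unfolding N_def using ES by (intro sets.countable_INT) auto
  have "measure Mm N < 1 / Suc m" for m
  proof -
    have "measure Mm N \<le> measure Mm (E m)"
      using NS ES by (intro finite_measure.finite_measure_mono[OF fin_Mm]) (auto simp: N_def)
    then show ?thesis using mE[of m] by linarith
  qed
  then have "measure Mm N = 0" by (intro small_zero) auto
  then have nN: "null_set V v N" using NS by (intro imp_null) auto
  have sub: "{x\<in>X. \<not> ((\<lambda>n. s n x) \<longlonglongrightarrow> indicator A x)} \<subseteq> N \<union> D"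
  proof (rule subsetI, rule ccontr)
    fix x assume x: "x \<in> {x\<in>X. \<not> ((\<lambda>n. s n x) \<longlonglongrightarrow> indicator A x)}" "x \<notin> N \<union> D"
    then obtain m where "x \<notin> E m" by (auto simp: N_def)
    then have xE: "\<And>j. x \<notin> symdiff (P (j + Suc m)) B" by (simp add: E_def)
    have ev: "\<forall>n\<ge>Suc m. x \<notin> symdiff (P n) B"
    proof (intro allI impI)
      fix n assume "Suc m \<le> n"
      then obtain k where "n = k + Suc m" using le_Suc_ex[of "Suc m" n] by (auto simp: add.commute)
      then show "x \<notin> symdiff (P n) B" using xE[of k] by simp
    qed
    have "indicator A x = (indicator B x :: real)" using x(2) A(1) by (auto simp: symdiff_def indicator_def)
    moreover have "\<forall>n\<ge>Suc m. s n x = indicator B x"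
      using ev by (auto simp: s_eq symdiff_def indicator_def)
    ultimately have "eventually (\<lambda>n. s n x = indicator A x) sequentially"
      by (auto simp: eventually_sequentially)
    then have "(\<lambda>n. s n x) \<longlonglongrightarrow> indicator A x" by (rule tendsto_eventually)
    then show False using x(1) by simp
  qed
  have "null_set V v {x\<in>X. \<not> ((\<lambda>n. s n x) \<longlonglongrightarrow> indicator A x)}"
    using null_subset[OF null_Un[OF nN D] sub] .
  then show ?thesis unfolding V_c_def L_space_def using bs A(2) by blast
qed

end

context msp begin

definition rf :: "('a \<Rightarrow> real) \<Rightarrow> bool" where
  "rf q \<longleftrightarrow> finite (q ` X) \<and> (\<forall>t. {x\<in>X. q x = t} \<in> R)"

lemma XR: "X \<in> R" using XV by (rule V_R)

lemma rf_const: "rf (\<lambda>x. c)"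
proof -
  have "{x\<in>X. c = t} \<in> R" for t
    by (cases "c = t") (auto simp: XR S_of_empty)
  moreover have "finite ((\<lambda>x. c) ` X)" by (rule finite_subset[of _ "{c}"]) auto
  ultimately show ?thesis unfolding rf_def by blast
qed

lemma rf_ind: assumes "A \<in> V" shows "rf (indicator A)"
proof -
  have AX: "A \<subseteq> X" using assms VX by auto
  have "{x\<in>X. indicator A x = t} \<in> R" for t
  proof -
    have "{x\<in>X. indicator A x = t} = (if t = 1 then A else {}) \<union> (if t = 0 then X - A else {})"
      using AX by (auto simp: indicator_def)
    moreover have "A \<in> R" "X - A \<in> R" using assms XR V_R S_Diff[OF pr] by auto
    ultimately show ?thesis using S_Un[OF pr] S_of_empty by (auto simp del: Un_iff)
  qed
  moreover have "finite (indicator A ` X :: real set)"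
    by (rule finite_subset[of _ "{0,1}"]) (auto simp: indicator_def)
  ultimately show ?thesis unfolding rf_def by blast
qed

lemma rf_comb2:
  assumes g1: "rf g1" and g2: "rf g2"
  shows "rf (\<lambda>x. \<phi> (g1 x) (g2 x))"
proof -
  let ?P = "g1 ` X \<times> g2 ` X"
  have finP: "finite ?P" using g1 g2 by (auto simp: rf_def)
  have "finite ((\<lambda>x. \<phi> (g1 x) (g2 x)) ` X)"
  proof (rule finite_subset[of _ "(\<lambda>p. \<phi> (fst p) (snd p)) ` ?P"])
    show "(\<lambda>x. \<phi> (g1 x) (g2 x)) ` X \<subseteq> (\<lambda>p. \<phi> (fst p) (snd p)) ` ?P"
    proof
      fix y assume "y \<in> (\<lambda>x. \<phi> (g1 x) (g2 x)) ` X"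
      then obtain x where "x \<in> X" "y = \<phi> (g1 x) (g2 x)" by blast
      then show "y \<in> (\<lambda>p. \<phi> (fst p) (snd p)) ` ?P" by (intro image_eqI[of _ _ "(g1 x, g2 x)"]) auto
    qed
  qed (rule finite_imageI[OF finP])
  moreover have "{x\<in>X. \<phi> (g1 x) (g2 x) = t} \<in> R" for t
  proof -
    let ?Q = "{p\<in>?P. \<phi> (fst p) (snd p) = t}"
    have "{x\<in>X. \<phi> (g1 x) (g2 x) = t} = (\<Union>p\<in>?Q. {x\<in>X. g1 x = fst p} \<inter> {x\<in>X. g2 x = snd p})"
    proof (rule set_eqI, rule iffI)
      fix x assume "x \<in> {x\<in>X. \<phi> (g1 x) (g2 x) = t}"
      then have x: "x \<in> X" "\<phi> (g1 x) (g2 x) = t" by auto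
      then have "(g1 x, g2 x) \<in> ?Q" by auto
      then show "x \<in> (\<Union>p\<in>?Q. {x\<in>X. g1 x = fst p} \<inter> {x\<in>X. g2 x = snd p})"
        using x by (intro UN_I[of "(g1 x, g2 x)"]) auto
    next
      fix x assume "x \<in> (\<Union>p\<in>?Q. {x\<in>X. g1 x = fst p} \<inter> {x\<in>X. g2 x = snd p})"
      then obtain p where "p \<in> ?Q" "x \<in> X" "g1 x = fst p" "g2 x = snd p" by blast
      then show "x \<in> {x\<in>X. \<phi> (g1 x) (g2 x) = t}" by auto
    qed
    also have "\<dots> \<in> R"
      using finP g1 g2 unfolding rf_def
      by (intro ring_of_sets.finite_UN[OF ring] S_Int[OF pr]) auto
    finally show ?thesis .
  qed
  ultimately show ?thesis unfolding rf_def by blast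
qed

lemma rf_sum: "finite I \<Longrightarrow> (\<And>i. i \<in> I \<Longrightarrow> rf (q i)) \<Longrightarrow> rf (\<lambda>x. \<Sum>i\<in>I. q i x)"
proof (induction I rule: finite_induct)
  case empty then show ?case using rf_const[of 0] by simp
next
  case (insert i I)
  then have "rf (\<lambda>x. q i x + (\<Sum>i\<in>I. q i x))"
    using rf_comb2[of "q i" "\<lambda>x. \<Sum>i\<in>I. q i x" "(+)"] by auto
  then show ?case using insert by simp
qed

lemma rf_simple: assumes "simple_fun V h" shows "rf h"
proof -
  obtain n r A where rep: "simple_rep V h n r A" using assms by (auto simp: simple_fun_def)
  then have AV: "\<And>i. i < n \<Longrightarrow> A i \<in> V" and h: "h = (\<lambda>x. \<Sum>i<n. r i * indicator (A i) x)"
    by (auto simp: simple_rep_def)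
  have "rf (\<lambda>x. r i * indicator (A i) x)" if "i < n" for i
    using rf_comb2[OF rf_const rf_ind[OF AV[OF that]], of "(*)" "r i"] by simp
  then show ?thesis unfolding h by (intro rf_sum) auto
qed

lemma rf_gt: assumes "rf q" shows "{x\<in>X. q x > c} \<in> R"
proof -
  have "{x\<in>X. q x > c} = (\<Union>u\<in>{u\<in>q ` X. u > c}. {x\<in>X. q x = u})" by auto
  also have "\<dots> \<in> R" using assms unfolding rf_def
    by (intro ring_of_sets.finite_UN[OF ring]) auto
  finally show ?thesis .
qed

lemma Vc_b:
  assumes "A \<in> V_c X V v"
  shows "\<exists>B D. B \<in> sigma_of (delta_of (S_of V)) \<and> null_set V v D \<and> A = symdiff B D"
proof -
  from assms obtain s where AX: "A \<subseteq> X" and bs: "basic_seq V v s"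
    and nul: "null_set V v {x\<in>X. \<not> ((\<lambda>n. s n x) \<longlonglongrightarrow> indicator A x)}"
    unfolding V_c_def L_space_def by blast
  from bs obtain h M where hs: "\<And>n. n \<ge> 1 \<Longrightarrow> simple_fun V (h n)"
    and s: "\<And>n. s n = (\<lambda>x. \<Sum>k\<in>{1..n}. h k x)"
    unfolding basic_seq_def by blast
  have rfs: "rf (s n)" for n unfolding s using hs by (intro rf_sum rf_simple) auto
  define T where "T n = {x\<in>X. s n x > 1/2}" for n
  have TR: "T n \<in> R" for n unfolding T_def using rfs by (rule rf_gt)
  define B where "B = (\<Union>m. \<Inter>n. T (n + m))"
  have "B \<in> sigma_of (delta_of R)"
    unfolding B_def sigma_of_def delta_of_def using TR by blast
  define D0 where "D0 = {x\<in>X. \<not> ((\<lambda>n. s n x) \<longlonglongrightarrow> indicator A x)}"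
  have sub: "symdiff A B \<subseteq> D0"
  proof
    fix x assume x: "x \<in> symdiff A B"
    have xX: "x \<in> X" using x AX by (auto simp: symdiff_def B_def T_def)
    show "x \<in> D0"
    proof (rule ccontr)
      assume "x \<notin> D0"
      then have lim: "(\<lambda>n. s n x) \<longlonglongrightarrow> indicator A x" using xX by (auto simp: D0_def)
      show False
      proof (cases "x \<in> A")
        case True
        then have "(\<lambda>n. s n x) \<longlonglongrightarrow> 1" using lim by simp
        then have "eventually (\<lambda>n. s n x > 1/2) sequentially" by (intro order_tendstoD) auto
        then obtain m where "\<forall>n\<ge>m. s n x > 1/2" by (auto simp: eventually_sequentially)
        then have "\<forall>n. x \<in> T (n + m)" using xX by (auto simp: T_def)
        then have "x \<in> B" by (auto simp: B_def)
        then show False using x True by (auto simp: symdiff_def)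
      next
        case False
        then have "(\<lambda>n. s n x) \<longlonglongrightarrow> 0" using lim by simp
        then have "eventually (\<lambda>n. s n x < 1/2) sequentially" by (intro order_tendstoD) auto
        then obtain m where m: "\<forall>n\<ge>m. s n x < 1/2" by (auto simp: eventually_sequentially)
        have "x \<in> B" using x False by (auto simp: symdiff_def)
        then obtain k where "\<forall>n. x \<in> T (n + k)" by (auto simp: B_def)
        then have "s (m + k) x > 1/2" by (auto simp: T_def)
        moreover have "s (m + k) x < 1/2" using m by simp
        ultimately show False by simp
      qed
    qed
  qed
  have nD: "null_set V v (symdiff A B)" using null_subset[OF nul] sub by (simp add: D0_def)
  have "A = symdiff B (symdiff A B)" by (auto simp: symdiff_def)
  then show ?thesis using nD \<open>B \<in> sigma_of (delta_of R)\<close> by blast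
qed

end

theorem mainTheorem10:
  fixes X :: "'a set" and V :: "'a set set" and v :: "'a set \<Rightarrow> real" and A :: "'a set"
  assumes "measure_space_pr X V v" and "X \<in> V" and "A \<subseteq> X"
  shows "(A \<in> V_c X V v \<longleftrightarrow>
           (\<exists>B D. B \<in> sigma_of (delta_of (S_of V)) \<and> null_set V v D \<and> A = symdiff B D))
       \<and> (A \<in> V_c X V v \<longleftrightarrow>
           (\<exists>B D. B \<in> delta_of (sigma_of V) \<and> null_set V v D \<and> A = symdiff B D))"
proof -
  interpret M: msp X V v using assms(1,2) by unfold_locales
  have RS: "S_of V \<subseteq> sets M.Mm" using M.R_sets by blast
  have VS: "V \<subseteq> sets M.Mm" using M.V_sets by blast
  have b_a: "A \<in> V_c X V v" if "B \<in> sets M.Mm" "null_set V v D" "A = symdiff B D" for B D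
    using M.sig_Vc[OF that assms(3)] .
  have a_c: "\<exists>B D. B \<in> delta_of (sigma_of V) \<and> null_set V v D \<and> A = symdiff B D"
    if a: "A \<in> V_c X V v"
  proof -
    obtain B D where BD: "B \<in> sigma_of (delta_of (S_of V))" "null_set V v D" "A = symdiff B D"
      using M.Vc_b[OF a] by blast
    have BS: "B \<in> sets M.Mm" using BD(1) M.sigma_of_sets[OF M.delta_of_sets[OF RS]] by blast
    obtain B' where B': "B' \<in> delta_of (sigma_of V)" "B \<subseteq> B'" "B' \<in> sets M.Mm" "measure M.Mm (B' - B) = 0"
      using M.outer_approx[OF BS] by blast
    have n2: "null_set V v (B' - B)" using B' BS by (intro M.imp_null[of "B' - B"]) auto
    have sub: "symdiff A B' \<subseteq> D \<union> (B' - B)" using BD(3) B'(2) by (auto simp: symdiff_def)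
    have nD: "null_set V v (symdiff A B')" using M.null_subset[OF M.null_Un[OF BD(2) n2] sub] .
    have "A = symdiff B' (symdiff A B')" by (auto simp: symdiff_def)
    then show ?thesis using nD B'(1) by blast
  qed
  have c_a: "A \<in> V_c X V v" if "B \<in> delta_of (sigma_of V)" "null_set V v D" "A = symdiff B D" for B D
  proof -
    have "B \<in> sets M.Mm" using that(1) M.delta_of_sets[OF M.sigma_of_sets[OF VS]] by blast
    then show ?thesis using b_a that(2,3) by blast
  qed
  have b_a': "A \<in> V_c X V v" if "B \<in> sigma_of (delta_of (S_of V))" "null_set V v D" "A = symdiff B D" for B D
  proof -
    have "B \<in> sets M.Mm" using that(1) M.sigma_of_sets[OF M.delta_of_sets[OF RS]] by blast
    then show ?thesis using b_a that(2,3) by blast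
  qed
  show ?thesis using M.Vc_b a_c c_a b_a' by blast
qed

end
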